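(* Let $\theta>1$ be real and let $n$ be a positive integer with $n>\log_2\theta$. Then exactly one of the following holds: (i) $M_\theta(n)=\left\lfloor \frac{n}{\log\theta}-\frac12\right\rfloor$ and $n\notin\mathcal A_\theta$; (ii) $M_\theta(n)=\left\lfloor \frac{n}{\log\theta}+\frac12\right\rfloor$ and $n\in\mathcal A_\theta$.
   Context: $\lfloor x\rfloor$ is the floor of $x$ and $\{x\}=x-\lfloor x\rfloor$ its fractional part; $\log$ is the natural logarithm. For real $\theta>1$ and positive integer $n$, $M_\theta(n)=\left\lfloor 1/\{\theta^{1/n}\}\right\rfloor$ and $M'_\theta(n)=\left\lfloor 1/(\theta^{1/n}-1)\right\rfloor$. The set of atypical numbers is $\mathcal A_\theta=\{n\in\mathbb N: M'_\theta(n)\neq \lfloor n/\log\theta-1/2\rfloor\}$, where $\mathbb N$ is the set of positive integers. *)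

theory Defs
  imports Complex_Main
begin

definition M :: "real \<Rightarrow> nat \<Rightarrow> int" where
  "M \<theta> n = \<lfloor>1 / frac (\<theta> powr (1 / real n))\<rfloor>"

definition M' :: "real \<Rightarrow> nat \<Rightarrow> int" where
  "M' \<theta> n = \<lfloor>1 / (\<theta> powr (1 / real n) - 1)\<rfloor>"

definition atypical :: "real \<Rightarrow> nat set" where
  "atypical \<theta> = {n. n \<ge> 1 \<and> M' \<theta> n \<noteq> \<lfloor>real n / ln \<theta> - 1/2\<rfloor>}"

end

theory Submission
  imports Defs
begin

lemma exp_bound:
  fixes t :: real assumes t: "t > 0"
  shows "(2 - t) * exp t < 2 + t"
proof -
  define f where "f = (\<lambda>s::real. (2+s) * exp (-s) + s - 2)"
  have d: "\<And>x. 0 \<le> x \<Longrightarrow> x \<le> t \<Longrightarrow> DERIV f x :> (1 - (1+x) * exp (-x))"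
    unfolding f_def by (auto intro!: derivative_eq_intros simp: algebra_simps)
  obtain z where z: "z > 0" "z < t" "f t - f 0 = (t - 0) * (1 - (1+z) * exp (-z))"
    using MVT2[OF t d] by blast
  have "1 + z < exp z" using z(1) exp_minus_greater[of "-z"] by simp
  hence "(1+z) * exp (-z) < 1"
    by (simp add: exp_minus field_simps)
  hence "f t > 0" using z t by (simp add: f_def)
  hence "(2+t) * exp (-t) > 2 - t" by (simp add: f_def)
  hence "(2+t) * exp (-t) * exp t > (2 - t) * exp t" by simp
  moreover have "(2+t) * exp (-t) * exp t = 2 + t" by (simp add: exp_minus field_simps)
  ultimately show ?thesis by simp
qed

lemma y_bounds:
  fixes t :: real assumes t: "t > 0"
  shows "1 / (exp t - 1) < 1/t" "1/t - 1/2 < 1 / (exp t - 1)"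
proof -
  have e: "exp t - 1 > t" using t exp_minus_greater[of "-t"] by simp
  show "1 / (exp t - 1) < 1/t" using e t by (simp add: frac_less2)
  have b: "(2 - t) * exp t < 2 + t" using exp_bound[OF t] .
  have p: "exp t - 1 > 0" using e t by simp
  have "(2 - t) * (exp t - 1) < 2 * t" using b by (simp add: algebra_simps)
  hence "(2 - t) / (2*t) < 1 / (exp t - 1)" using p t by (simp add: field_simps)
  moreover have "1/t - 1/2 = (2 - t) / (2*t)" using t by (simp add: field_simps)
  ultimately show "1/t - 1/2 < 1 / (exp t - 1)" by simp
qed

theorem theorem1:
  fixes \<theta> :: real and n :: nat
  assumes "\<theta> > 1" and "n \<ge> 1" and "real n > log 2 \<theta>"
  shows "(M \<theta> n = \<lfloor>real n / ln \<theta> - 1/2\<rfloor> \<and> n \<notin> atypical \<theta>) \<noteq>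
         (M \<theta> n = \<lfloor>real n / ln \<theta> + 1/2\<rfloor> \<and> n \<in> atypical \<theta>)"
proof -
  define t where "t = ln \<theta> / real n"
  have ln0: "ln \<theta> > 0" using assms(1) by simp
  have n0: "real n > 0" using assms(2) by simp
  have t0: "t > 0" using ln0 n0 by (simp add: t_def)
  have x: "\<theta> powr (1 / real n) = exp t"
    using assms(1) by (simp add: powr_def t_def)
  have "ln \<theta> / ln 2 < real n" using assms(3) by (simp add: log_def)
  hence "ln \<theta> < real n * ln 2" by (simp add: divide_less_eq)
  hence "t < ln 2" using n0 by (simp add: t_def divide_less_eq mult.commute)
  hence e2: "exp t < 2" by (metis exp_less_cancel_iff exp_ln zero_less_numeral)
  have e1: "exp t > 1" using t0 by simp
  have fl: "\<lfloor>exp t\<rfloor> = 1" using e1 e2 by (simp add: floor_eq_iff)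
  have fr: "frac (exp t) = exp t - 1" using fl by (simp add: frac_def)
  have MM: "M \<theta> n = M' \<theta> n" by (simp add: M_def M'_def x fr)
  have L: "real n / ln \<theta> = 1 / t" by (simp add: t_def)
  define y where "y = 1 / (exp t - 1)"
  have yb: "y < 1/t" "1/t - 1/2 < y" using y_bounds[OF t0] by (auto simp: y_def)
  have M'y: "M' \<theta> n = \<lfloor>y\<rfloor>" by (simp add: M'_def x y_def)
  define a where "a = \<lfloor>1/t - 1/2\<rfloor>"
  have a1: "\<lfloor>1/t + 1/2\<rfloor> = a + 1"
  proof -
    have "1/t + 1/2 = (1/t - 1/2) + 1" by simp
    thus ?thesis unfolding a_def by (metis one_add_floor)
  qed
  have lo: "a \<le> \<lfloor>y\<rfloor>" unfolding a_def using yb by (intro floor_mono) simp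
  have hi: "\<lfloor>y\<rfloor> \<le> a + 1" unfolding a1[symmetric] using yb by (intro floor_mono) simp
  have mem: "n \<in> atypical \<theta> \<longleftrightarrow> M' \<theta> n \<noteq> a"
    using assms(2) by (simp add: atypical_def L a_def)
  show ?thesis unfolding MM L a1 mem M'y a_def[symmetric] using lo hi by auto
qed

end
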